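(* For all integers $n\ge1$, $k\ge0$, every sequence $\boldsymbol a$ of positive reals and all $t$, \[ \theta_{n;k}(t)=\sum_{j=0}^{k} t^j\,\theta_{n;j}(1)\,(1-t)^{k-j}\,\theta_{n;k-j}(0), \] where $\theta_{n;j}(1)=h_j(a_1,\dots,a_n)$ is the complete homogeneous symmetric polynomial and $\theta_{n;j}(0)=e_j(a_1,\dots,a_n)$ is the elementary symmetric polynomial.
   Context: Let $\boldsymbol a=(a_j)_{j\ge1}$ be a sequence of positive reals. For integers $n\ge1$, $k\ge0$ let $\mathcal M_{n,k}=\{(\ell_1,\dots,\ell_k)\in\mathbb N^k: n\ge\ell_1\ge\cdots\ge\ell_k\ge1\}$. For $\vec\ell\in\mathcal M_{n,k}$ let $\sigma(\vec\ell)=|\{1\le j\le k-1:\ell_j=\ell_{j+1}\}|$ and $w(\vec\ell)=\prod_{j=1}^k a_{\ell_j}$. Define $\theta_{n;k}(t)=\sum_{\vec\ell\in\mathcal M_{n,k}}w(\vec\ell)\,t^{\sigma(\vec\ell)}$, with $\theta_{n;0}(t)=1$. *)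

theory Defs
  imports "HOL-Analysis.Analysis" "HOL-Library.Multiset"
begin

text \<open>Weakly decreasing tuples (l_1,...,l_k) with n >= l_1 >= ... >= l_k >= 1,
  represented as functions on indices 0..k-1 (value 0 outside).\<close>
definition M :: "nat \<Rightarrow> nat \<Rightarrow> (nat \<Rightarrow> nat) set" where
  "M n k = {l. (\<forall>j<k. 1 \<le> l j \<and> l j \<le> n) \<and> (\<forall>j. Suc j < k \<longrightarrow> l (Suc j) \<le> l j)
              \<and> (\<forall>j\<ge>k. l j = 0)}"

definition sigma :: "nat \<Rightarrow> (nat \<Rightarrow> nat) \<Rightarrow> nat" where
  "sigma k l = card {j. Suc j < k \<and> l j = l (Suc j)}"

definition wt :: "(nat \<Rightarrow> real) \<Rightarrow> nat \<Rightarrow> (nat \<Rightarrow> nat) \<Rightarrow> real" where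
  "wt a k l = (\<Prod>j<k. a (l j))"

definition theta :: "(nat \<Rightarrow> real) \<Rightarrow> nat \<Rightarrow> nat \<Rightarrow> real \<Rightarrow> real" where
  "theta a n k t = (\<Sum>l\<in>M n k. wt a k l * t ^ sigma k l)"

definition hcomp :: "(nat \<Rightarrow> real) \<Rightarrow> nat \<Rightarrow> nat \<Rightarrow> real" where
  "hcomp a n j = (\<Sum>A\<in>{A. set_mset A \<subseteq> {1..n} \<and> size A = j}. \<Prod>i\<in>#A. a i)"

definition elem :: "(nat \<Rightarrow> real) \<Rightarrow> nat \<Rightarrow> nat \<Rightarrow> real" where
  "elem a n j = (\<Sum>S\<in>{S. S \<subseteq> {1..n} \<and> card S = j}. \<Prod>i\<in>S. a i)"

end

theory Submission imports Defs begin

lemma M_fin: "finite (M n k)"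
proof -
  have "M n k \<subseteq> {f. \<forall>x. (x \<in> {..<k} \<longrightarrow> f x \<in> {0..n}) \<and> (x \<notin> {..<k} \<longrightarrow> f x = 0)}"
    by (auto simp: M_def)
  then show ?thesis by (rule finite_subset) (rule finite_set_of_finite_funs, auto)
qed

lemma M_le0: "l \<in> M n k \<Longrightarrow> j < k \<Longrightarrow> l j \<le> l 0"
proof (induction j)
  case (Suc j) then show ?case unfolding M_def
    by (metis (no_types, lifting) Suc_lessD le_trans mem_Collect_eq)
qed simp

lemma M_zero: "M 0 k = (if k = 0 then {\<lambda>_. 0} else {})"
  by (auto simp: M_def)

lemma M_k0: "M n 0 = {\<lambda>_. 0}"
  by (auto simp: M_def)

lemma theta_k0: "theta a n 0 t = 1"
  by (simp add: theta_def M_k0 wt_def sigma_def)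

lemma theta_n0: "theta a 0 k t = (if k = 0 then 1 else 0)"
  by (simp add: theta_def M_zero wt_def sigma_def)

definition Bs :: "(nat \<Rightarrow> real) \<Rightarrow> nat \<Rightarrow> nat \<Rightarrow> real \<Rightarrow> real" where
  "Bs a n k t = (\<Sum>l\<in>{l\<in>M n k. l 0 = n}. wt a k l * t ^ sigma k l)"

lemma M_split: "M (Suc n) k = M n k \<union> {l\<in>M (Suc n) k. l 0 = Suc n}"
  and M_disj: "M n k \<inter> {l\<in>M (Suc n) k. l 0 = Suc n} = {}"
proof -
  show "M (Suc n) k = M n k \<union> {l\<in>M (Suc n) k. l 0 = Suc n}"
  proof (intro equalityI subsetI)
    fix l assume l: "l \<in> M (Suc n) k"
    show "l \<in> M n k \<union> {l\<in>M (Suc n) k. l 0 = Suc n}"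
    proof (cases "l 0 = Suc n")
      case False
      have "l 0 \<le> Suc n" using l by (cases k) (auto simp: M_def)
      with False have "l 0 \<le> n" by simp
      then have "\<forall>j<k. l j \<le> n" using M_le0[OF l] le_trans by blast
      then show ?thesis using l by (auto simp: M_def)
    qed (use l in auto)
  qed (auto simp: M_def)
  show "M n k \<inter> {l\<in>M (Suc n) k. l 0 = Suc n} = {}"
  proof (safe)
    fix l assume l: "l \<in> M n k" "l \<in> M (Suc n) k" "l 0 = Suc n"
    show "l \<in> {}" using l by (cases k) (auto simp: M_def)
  qed
qed

lemma R1: "theta a (Suc n) k t = theta a n k t + Bs a (Suc n) k t"
  unfolding theta_def Bs_def
  by (subst M_split, subst sum.union_disjoint) (use M_fin M_disj in auto)

lemma wt_cons: "wt a (Suc k) (case_nat c l) = a c * wt a k l"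
  by (simp add: wt_def prod.lessThan_Suc_shift del: prod.lessThan_Suc)

lemma sigma_cons: "sigma (Suc k) (case_nat c l) = sigma k l + (if 0 < k \<and> l 0 = c then 1 else 0)"
proof -
  have e: "{j. Suc j < Suc k \<and> case_nat c l j = case_nat c l (Suc j)} =
     (if 0 < k \<and> l 0 = c then {0} else {}) \<union> Suc ` {j. Suc j < k \<and> l j = l (Suc j)}"
  proof (intro set_eqI)
    fix x show "x \<in> {j. Suc j < Suc k \<and> case_nat c l j = case_nat c l (Suc j)} \<longleftrightarrow>
      x \<in> (if 0 < k \<and> l 0 = c then {0} else {}) \<union> Suc ` {j. Suc j < k \<and> l j = l (Suc j)}"
      by (cases x) (auto simp: image_iff)
  qed
  have f: "finite {j. Suc j < k \<and> l j = l (Suc j)}" by (rule finite_subset[of _ "{..<k}"]) auto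
  show ?thesis unfolding sigma_def e
    using f by (subst card_Un_disjoint) (auto simp: card_image)
qed

lemma img: "{l\<in>M (Suc n) (Suc k). l 0 = Suc n} = case_nat (Suc n) ` M (Suc n) k"
proof (intro equalityI subsetI)
  fix l assume l: "l \<in> {l\<in>M (Suc n) (Suc k). l 0 = Suc n}"
  have "l = case_nat (Suc n) (l \<circ> Suc)" using l by (auto simp: fun_eq_iff split: nat.splits)
  moreover have "l \<circ> Suc \<in> M (Suc n) k" using l by (auto simp: M_def)
  ultimately show "l \<in> case_nat (Suc n) ` M (Suc n) k" by blast
next
  fix l assume "l \<in> case_nat (Suc n) ` M (Suc n) k"
  then obtain l' where l': "l' \<in> M (Suc n) k" "l = case_nat (Suc n) l'" by auto
  have "l' 0 \<le> Suc n" using l' by (cases k) (auto simp: M_def)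
  then show "l \<in> {l\<in>M (Suc n) (Suc k). l 0 = Suc n}" using l'
    by (auto simp: M_def split: nat.splits)
qed

lemma R2: "Bs a (Suc n) (Suc k) t = a (Suc n) * (theta a n k t + t * Bs a (Suc n) k t)"
proof -
  have inj: "inj (case_nat (Suc n) :: (nat \<Rightarrow> nat) \<Rightarrow> _)"
    by (auto simp: inj_def fun_eq_iff) (metis old.nat.simps(5))
  have "Bs a (Suc n) (Suc k) t = (\<Sum>l\<in>M (Suc n) k. a (Suc n) * wt a k l * t ^ (sigma k l + (if 0 < k \<and> l 0 = Suc n then 1 else 0)))"
    unfolding Bs_def img
    by (subst sum.reindex) (use inj in \<open>auto simp: inj_on_def wt_cons sigma_cons\<close>)
  also have "\<dots> = (\<Sum>l\<in>M n k. a (Suc n) * wt a k l * t ^ sigma k l) + (\<Sum>l\<in>{l\<in>M (Suc n) k. l 0 = Suc n}. a (Suc n) * (t * (wt a k l * t ^ sigma k l)))"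
  proof (subst M_split, subst sum.union_disjoint)
    show "finite (M n k)" "finite {l \<in> M (Suc n) k. l 0 = Suc n}" using M_fin by auto
    show "M n k \<inter> {l \<in> M (Suc n) k. l 0 = Suc n} = {}" by (rule M_disj)
    have a: "l \<in> M n k \<Longrightarrow> l 0 \<noteq> Suc n" for l by (cases k) (auto simp: M_def)
    have b: "l \<in> M (Suc n) k \<Longrightarrow> l 0 = Suc n \<Longrightarrow> 0 < k" for l by (cases k) (auto simp: M_def)
    show "(\<Sum>l\<in>M n k. a (Suc n) * wt a k l * t ^ (sigma k l + (if 0 < k \<and> l 0 = Suc n then 1 else 0))) +
    (\<Sum>l\<in>{l \<in> M (Suc n) k. l 0 = Suc n}. a (Suc n) * wt a k l * t ^ (sigma k l + (if 0 < k \<and> l 0 = Suc n then 1 else 0))) =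
    (\<Sum>l\<in>M n k. a (Suc n) * wt a k l * t ^ sigma k l) + (\<Sum>l\<in>{l \<in> M (Suc n) k. l 0 = Suc n}. a (Suc n) * (t * (wt a k l * t ^ sigma k l)))"
      using a b by (intro arg_cong2[where f="(+)"] sum.cong) auto
  qed
  also have "\<dots> = a (Suc n) * (theta a n k t + t * Bs a (Suc n) k t)"
    unfolding theta_def Bs_def by (simp add: sum_distrib_left algebra_simps)
  finally show ?thesis .
qed

lemma Bs_0: "Bs a (Suc n) 0 t = 0"
proof -
  have "{l\<in>M (Suc n) 0. l 0 = Suc n} = {}" by (auto simp: M_k0)
  then show ?thesis unfolding Bs_def by (metis sum.empty)
qed

lemma theta1_rec: "theta a (Suc n) (Suc k) 1 = theta a n (Suc k) 1 + a (Suc n) * theta a (Suc n) k 1"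
  using R1[of a n "Suc k" 1] R2[of a n k 1] R1[of a n k 1] by simp

lemma theta0_rec: "theta a (Suc n) (Suc k) 0 = theta a n (Suc k) 0 + a (Suc n) * theta a n k 0"
  using R1[of a n "Suc k" 0] R2[of a n k 0] by simp

definition HS :: "nat \<Rightarrow> nat \<Rightarrow> nat multiset set" where
  "HS n k = {A. set_mset A \<subseteq> {1..n} \<and> size A = k}"

lemma HS_fin: "finite (HS n k)"
proof -
  have "HS n k \<subseteq> mset ` {xs. set xs \<subseteq> {1..n} \<and> length xs = k}"
  proof
    fix A assume "A \<in> HS n k"
    moreover obtain xs where "A = mset xs" by (metis ex_mset)
    ultimately show "A \<in> mset ` {xs. set xs \<subseteq> {1..n} \<and> length xs = k}"
      by (auto simp: HS_def)
  qed
  then show ?thesis by (rule finite_subset) (intro finite_imageI finite_lists_length_eq, simp)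
qed

lemma HS_split: "HS (Suc n) (Suc k) = HS n (Suc k) \<union> add_mset (Suc n) ` HS (Suc n) k"
proof (intro equalityI subsetI)
  fix A assume A: "A \<in> HS (Suc n) (Suc k)"
  show "A \<in> HS n (Suc k) \<union> add_mset (Suc n) ` HS (Suc n) k"
  proof (cases "Suc n \<in># A")
    case True
    then have "A = add_mset (Suc n) (A - {#Suc n#})" by simp
    moreover have "A - {#Suc n#} \<in> HS (Suc n) k" using A True
      by (auto simp: HS_def size_Diff_singleton dest: in_diffD)
    ultimately show ?thesis by blast
  next
    case False
    have "\<forall>x\<in>#A. x \<noteq> Suc n \<and> 1 \<le> x \<and> x \<le> Suc n" using A False by (auto simp: HS_def)
    then have "set_mset A \<subseteq> {1..n}" by (auto simp: le_Suc_eq)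
    then show ?thesis using A by (auto simp: HS_def)
  qed
qed (auto simp: HS_def)

lemma hcomp_rec: "hcomp a (Suc n) (Suc k) = hcomp a n (Suc k) + a (Suc n) * hcomp a (Suc n) k"
proof -
  have d: "HS n (Suc k) \<inter> add_mset (Suc n) ` HS (Suc n) k = {}" by (auto simp: HS_def)
  have "hcomp a (Suc n) (Suc k) = (\<Sum>A\<in>HS (Suc n) (Suc k). \<Prod>i\<in>#A. a i)"
    by (simp add: hcomp_def HS_def)
  also have "\<dots> = (\<Sum>A\<in>HS n (Suc k). \<Prod>i\<in>#A. a i) + (\<Sum>A\<in>add_mset (Suc n) ` HS (Suc n) k. \<Prod>i\<in>#A. a i)"
    unfolding HS_split by (rule sum.union_disjoint) (use HS_fin d in auto)
  also have "(\<Sum>A\<in>add_mset (Suc n) ` HS (Suc n) k. \<Prod>i\<in>#A. a i) = a (Suc n) * (\<Sum>A\<in>HS (Suc n) k. \<Prod>i\<in>#A. a i)"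
    by (subst sum.reindex) (auto simp: inj_on_def sum_distrib_left)
  finally show ?thesis by (simp add: hcomp_def HS_def)
qed

lemma hcomp_n0: "hcomp a 0 k = (if k = 0 then 1 else 0)"
proof -
  have "{A. set_mset A \<subseteq> {1..0::nat} \<and> size A = k} = (if k = 0 then {{#}} else {})"
    by auto
  then show ?thesis by (simp add: hcomp_def)
qed

lemma hcomp_k0: "hcomp a n 0 = 1"
proof -
  have "{A. set_mset A \<subseteq> {1..n} \<and> size A = 0} = {{#}}" by auto
  then show ?thesis by (simp add: hcomp_def)
qed

definition ES :: "nat \<Rightarrow> nat \<Rightarrow> nat set set" where
  "ES n k = {S. S \<subseteq> {1..n} \<and> card S = k}"

lemma ES_fin: "finite (ES n k)"
  by (rule finite_subset[of _ "Pow {1..n}"]) (auto simp: ES_def)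

lemma ES_split: "ES (Suc n) (Suc k) = ES n (Suc k) \<union> insert (Suc n) ` ES n k"
proof (intro equalityI subsetI)
  fix S assume S: "S \<in> ES (Suc n) (Suc k)"
  have fS: "finite S" using S by (auto simp: ES_def intro: finite_subset)
  show "S \<in> ES n (Suc k) \<union> insert (Suc n) ` ES n k"
  proof (cases "Suc n \<in> S")
    case True
    then have "S = insert (Suc n) (S - {Suc n})" by auto
    moreover have "S - {Suc n} \<in> ES n k" using S True fS
      by (auto simp: ES_def)
    ultimately show ?thesis by blast
  next
    case False
    have "\<forall>x\<in>S. x \<noteq> Suc n \<and> 1 \<le> x \<and> x \<le> Suc n" using S False by (auto simp: ES_def)
    then have "S \<subseteq> {1..n}" by (auto simp: le_Suc_eq)
    then show ?thesis using S by (auto simp: ES_def)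
  qed
next
  fix S assume "S \<in> ES n (Suc k) \<union> insert (Suc n) ` ES n k"
  then show "S \<in> ES (Suc n) (Suc k)"
  proof
    assume "S \<in> ES n (Suc k)" then show ?thesis by (auto simp: ES_def)
  next
    assume "S \<in> insert (Suc n) ` ES n k"
    then obtain T where T: "T \<subseteq> {1..n}" "card T = k" "S = insert (Suc n) T" by (auto simp: ES_def)
    have "finite T" using T(1) by (rule finite_subset) simp
    moreover have "Suc n \<notin> T" using T(1) by auto
    ultimately show ?thesis using T by (auto simp: ES_def)
  qed
qed

lemma elem_rec: "elem a (Suc n) (Suc k) = elem a n (Suc k) + a (Suc n) * elem a n k"
proof -
  have d: "ES n (Suc k) \<inter> insert (Suc n) ` ES n k = {}" by (auto simp: ES_def)
  have "elem a (Suc n) (Suc k) = (\<Sum>S\<in>ES (Suc n) (Suc k). \<Prod>i\<in>S. a i)"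
    by (simp add: elem_def ES_def)
  also have "\<dots> = (\<Sum>S\<in>ES n (Suc k). \<Prod>i\<in>S. a i) + (\<Sum>S\<in>insert (Suc n) ` ES n k. \<Prod>i\<in>S. a i)"
    unfolding ES_split by (rule sum.union_disjoint) (use ES_fin d in auto)
  also have "(\<Sum>S\<in>insert (Suc n) ` ES n k. \<Prod>i\<in>S. a i) = a (Suc n) * (\<Sum>S\<in>ES n k. \<Prod>i\<in>S. a i)"
  proof -
    have i: "inj_on (insert (Suc n)) (ES n k)"
      unfolding inj_on_def ES_def by auto (metis atLeastAtMost_iff insert_ident not_less_eq_eq order_refl subsetD)+
    have "S \<in> ES n k \<Longrightarrow> prod a (insert (Suc n) S) = a (Suc n) * prod a S" for S
      by (subst prod.insert) (auto simp: ES_def intro: finite_subset)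
    then show ?thesis by (subst sum.reindex[OF i]) (auto simp: sum_distrib_left)
  qed
  finally show ?thesis by (simp add: elem_def ES_def)
qed

lemma elem_n0: "elem a 0 k = (if k = 0 then 1 else 0)"
proof -
  have "{S. S \<subseteq> {1..0::nat} \<and> card S = k} = (if k = 0 then {{}} else {})"
    by auto
  then show ?thesis by (simp add: elem_def)
qed

lemma elem_k0: "elem a n 0 = 1"
proof -
  have "{S. S \<subseteq> {1..n} \<and> card S = 0} = {{}}"
  proof (intro equalityI subsetI)
    fix S assume "S \<in> {S. S \<subseteq> {1..n} \<and> card S = 0}"
    then have "finite S" "card S = 0" using finite_subset[of S "{1..n}"] by auto
    then show "S \<in> {{}}" by simp
  qed auto
  then show ?thesis by (simp add: elem_def)
qed

lemma theta_h: "theta a n k 1 = hcomp a n k"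
proof (induction n arbitrary: k)
  case 0 then show ?case by (simp add: theta_n0 hcomp_n0)
next
  case (Suc n)
  note IH = Suc.IH
  show ?case
  proof (induction k)
    case 0 then show ?case by (simp add: theta_k0 hcomp_k0)
  next
    case (Suc k) then show ?case using IH by (simp add: theta1_rec hcomp_rec)
  qed
qed

lemma theta_e: "theta a n k 0 = elem a n k"
proof (induction n arbitrary: k)
  case 0 then show ?case by (simp add: theta_n0 elem_n0)
next
  case (Suc n)
  then show ?case by (cases k) (simp_all add: theta_k0 elem_k0 theta0_rec elem_rec)
qed

definition conv :: "(nat \<Rightarrow> real) \<Rightarrow> (nat \<Rightarrow> real) \<Rightarrow> nat \<Rightarrow> real" where
  "conv f g k = (\<Sum>j=0..k. f j * g (k - j))"

lemma conv_first: "conv f g (Suc k) = f 0 * g (Suc k) + conv (\<lambda>j. f (Suc j)) g k"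
  unfolding conv_def by (subst sum.atLeast0_atMost_Suc_shift) simp

lemma conv_last: "conv f g (Suc k) = conv f (\<lambda>j. g (Suc j)) k + f (Suc k) * g 0"
proof -
  have "conv f g (Suc k) = (\<Sum>j=0..k. f j * g (Suc k - j)) + f (Suc k) * g 0"
    unfolding conv_def by (subst sum.atLeast0_atMost_Suc) simp
  also have "(\<Sum>j=0..k. f j * g (Suc k - j)) = conv f (\<lambda>j. g (Suc j)) k"
    unfolding conv_def by (intro sum.cong) (auto simp: Suc_diff_le)
  finally show ?thesis .
qed

lemma conv_add1: "conv (\<lambda>j. f j + c * f' j) g k = conv f g k + c * conv f' g k"
  unfolding conv_def by (simp add: algebra_simps sum.distrib sum_distrib_left)

lemma conv_add2: "conv f (\<lambda>j. g j + c * g' j) k = conv f g k + c * conv f g' k"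
  unfolding conv_def by (simp add: algebra_simps sum.distrib sum_distrib_left)

lemma G_rec: "theta a (Suc n) (Suc k) t = theta a n (Suc k) t + a (Suc n) * (1 - t) * theta a n k t + a (Suc n) * t * theta a (Suc n) k t"
  using R1[of a n "Suc k" t] R2[of a n k t] R1[of a n k t] by (simp add: algebra_simps)

lemma main_conv: "theta a n k t = conv (\<lambda>j. t ^ j * theta a n j 1) (\<lambda>j. (1 - t) ^ j * theta a n j 0) k"
proof (induction n arbitrary: k)
  case 0
  show ?case
  proof (cases k)
    case 0 then show ?thesis by (simp add: conv_def theta_n0)
  next
    case (Suc m)
    have "conv (\<lambda>j. t ^ j * theta a 0 j 1) (\<lambda>j. (1 - t) ^ j * theta a 0 j 0) k = 0"
      unfolding conv_def by (intro sum.neutral) (auto simp: theta_n0 Suc)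
    then show ?thesis by (simp add: theta_n0 Suc)
  qed
next
  case (Suc n)
  note IH = Suc.IH
  define c where "c = a (Suc n)"
  define H where "H = (\<lambda>j. t ^ j * theta a n j 1)"
  define E where "E = (\<lambda>j. (1 - t) ^ j * theta a n j 0)"
  define H' where "H' = (\<lambda>j. t ^ j * theta a (Suc n) j 1)"
  define E' where "E' = (\<lambda>j. (1 - t) ^ j * theta a (Suc n) j 0)"
  have Hs: "H' (Suc j) = H (Suc j) + c * t * H' j" for j
  proof -
    have "H' (Suc j) = t ^ Suc j * (theta a n (Suc j) 1 + c * theta a (Suc n) j 1)"
      unfolding H'_def c_def using G_rec[of a n j 1] by simp
    then show ?thesis unfolding H_def H'_def by (simp add: algebra_simps)
  qed
  have Es: "E' (Suc j) = E (Suc j) + c * (1 - t) * E j" for j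
  proof -
    have "E' (Suc j) = (1 - t) ^ Suc j * (theta a n (Suc j) 0 + c * theta a n j 0)"
      unfolding E'_def c_def using G_rec[of a n j 0] by simp
    then show ?thesis unfolding E_def E'_def by (simp add: algebra_simps)
  qed
  have H0: "H 0 = 1" "H' 0 = 1" by (simp_all add: H_def H'_def theta_k0)
  have E0: "E 0 = 1" "E' 0 = 1" by (simp_all add: E_def E'_def theta_k0)
  have IH': "theta a n k t = conv H E k" for k using IH by (simp add: H_def E_def)
  have "theta a (Suc n) k t = conv H' E' k" for k
  proof (induction k)
    case 0 then show ?case by (simp add: conv_def theta_k0 H0 E0)
  next
    case (Suc k)
    have s1: "conv H' E' (Suc k) = E' (Suc k) + conv (\<lambda>j. H (Suc j) + c * t * H' j) E' k"
      using conv_first[of H' E' k] unfolding H0 Hs by simp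
    have s2: "conv (\<lambda>j. H (Suc j) + c * t * H' j) E' k = conv (\<lambda>j. H (Suc j)) E' k + c * t * conv H' E' k"
      by (rule conv_add1)
    have s3: "conv H E' (Suc k) = E' (Suc k) + conv (\<lambda>j. H (Suc j)) E' k"
      using conv_first[of H E' k] unfolding H0 by simp
    have s4: "conv H E' (Suc k) = conv H (\<lambda>j. E (Suc j) + c * (1 - t) * E j) k + H (Suc k)"
      using conv_last[of H E' k] unfolding E0 Es by simp
    have s5: "conv H (\<lambda>j. E (Suc j) + c * (1 - t) * E j) k = conv H (\<lambda>j. E (Suc j)) k + c * (1 - t) * conv H E k"
      by (rule conv_add2)
    have s6: "conv H E (Suc k) = conv H (\<lambda>j. E (Suc j)) k + H (Suc k)"
      using conv_last[of H E k] unfolding E0 by simp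
    have A: "conv H' E' (Suc k) = conv H E (Suc k) + c * (1 - t) * conv H E k + c * t * conv H' E' k"
      using s1 s2 s3 s4 s5 s6 by linarith
    have "theta a (Suc n) (Suc k) t = theta a n (Suc k) t + c * (1 - t) * theta a n k t + c * t * theta a (Suc n) k t"
      unfolding c_def by (rule G_rec)
    also have "\<dots> = conv H E (Suc k) + c * (1 - t) * conv H E k + c * t * conv H' E' k"
      by (simp only: IH' Suc.IH)
    finally show ?case using A by simp
  qed
  then show ?case by (simp add: H'_def E'_def)
qed

theorem mainTheorem2:
  fixes a :: "nat \<Rightarrow> real" and n k :: nat and t :: real
  assumes "n \<ge> 1" and "\<And>j. j \<ge> 1 \<Longrightarrow> a j > 0"
  shows "theta a n k t = (\<Sum>j=0..k. t ^ j * theta a n j 1 * (1 - t) ^ (k - j) * theta a n (k - j) 0)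
     \<and> (\<forall>j. theta a n j 1 = hcomp a n j) \<and> (\<forall>j. theta a n j 0 = elem a n j)"
proof (intro conjI allI)
  show "theta a n k t = (\<Sum>j=0..k. t ^ j * theta a n j 1 * (1 - t) ^ (k - j) * theta a n (k - j) 0)"
    using main_conv[of a n k t] by (simp add: conv_def mult.assoc)
qed (simp_all add: theta_h theta_e)

end
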